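(* Let $d\ge2$, $\alpha\in(0,\infty)^d$, $N\in\mathbb Z_+$. For every $0\le m\le N$ and all $r,s\in N\Delta_{(d-1)}$, $$\xi^{H,\alpha}_m(r,s)=\sum_{l=0}^{m}b_{ml}\,\chi^{H,\alpha}_l(r,s),\qquad b_{ml}=\sum_{n=l}^{m}\left(\frac{N_{[n]}}{(|\alpha|+N)_{(n)}}\right)^2\frac{m_{[n]}}{(|\alpha|+m)_{(n)}}\,a^{|\alpha|}_{nl}.$$
   Context: $N\Delta_{(d-1)}=\{r\in\mathbb Z_+^d:|r|=N\}$, $|v|=\sum_iv_i$. $(c)_{(k)}=\Gamma(c+k)/\Gamma(c)$, $c_{[k]}=c(c-1)\cdots(c-k+1)$. $DM_\beta(l;M)=\binom{M}{l}\prod_i(\beta_i)_{(l_i)}/(|\beta|)_{(M)}$ for $l\in\mathbb Z_+^d$ with $|l|=M$. $\xi^{H,\alpha}_m(r,s)=\sum_{|l|=m}DM_{\alpha+r}(l;m)DM_{\alpha+s}(l;m)/DM_\alpha(l;m)$. $\chi^{H,\alpha}_m(r,s)=\sum_{|l|=m}\frac{1}{DM_\alpha(l;m)}\frac{\binom{m}{l}p_l(r)}{N_{[m]}}\frac{\binom{m}{l}p_l(s)}{N_{[m]}}$ with $p_l(r)=\prod_i(r_i)_{[l_i]}$. $a^{\theta}_{nm}=(\theta+2n-1)(-1)^{n-m}\frac{(\theta+m)_{(n-1)}}{m!(n-m)!}$ for $0\le m\le n$ (with $a^\theta_{00}=1$). *)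

theory Defs
  imports Complex_Main
begin

text \<open>Vectors in Z_+^d / (0,inf)^d are represented as functions on nat,
  only the coordinates 0..d-1 being relevant.\<close>

definition simplex_pts :: "nat \<Rightarrow> nat \<Rightarrow> (nat \<Rightarrow> nat) set" where
  "simplex_pts d N = {r. (\<forall>i\<ge>d. r i = 0) \<and> (\<Sum>i<d. r i) = N}"

definition ffall :: "real \<Rightarrow> nat \<Rightarrow> real" where
  "ffall c k = (\<Prod>j<k. c - real j)"

definition multinom :: "nat \<Rightarrow> nat \<Rightarrow> (nat \<Rightarrow> nat) \<Rightarrow> real" where
  "multinom d M l = fact M / (\<Prod>i<d. fact (l i))"

definition DM :: "nat \<Rightarrow> (nat \<Rightarrow> real) \<Rightarrow> (nat \<Rightarrow> nat) \<Rightarrow> nat \<Rightarrow> real" where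
  "DM d \<beta> l M = multinom d M l * (\<Prod>i<d. pochhammer (\<beta> i) (l i))
                  / pochhammer (\<Sum>i<d. \<beta> i) M"

definition xiH :: "nat \<Rightarrow> (nat \<Rightarrow> real) \<Rightarrow> nat \<Rightarrow> (nat \<Rightarrow> nat) \<Rightarrow> (nat \<Rightarrow> nat) \<Rightarrow> real" where
  "xiH d \<alpha> m r s = (\<Sum>l\<in>simplex_pts d m.
      DM d (\<lambda>i. \<alpha> i + real (r i)) l m * DM d (\<lambda>i. \<alpha> i + real (s i)) l m / DM d \<alpha> l m)"

definition pl :: "nat \<Rightarrow> (nat \<Rightarrow> nat) \<Rightarrow> (nat \<Rightarrow> nat) \<Rightarrow> real" where
  "pl d l r = (\<Prod>i<d. ffall (real (r i)) (l i))"

definition chiH :: "nat \<Rightarrow> nat \<Rightarrow> (nat \<Rightarrow> real) \<Rightarrow> nat \<Rightarrow> (nat \<Rightarrow> nat) \<Rightarrow> (nat \<Rightarrow> nat) \<Rightarrow> real" where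
  "chiH d N \<alpha> m r s = (\<Sum>l\<in>simplex_pts d m.
      (1 / DM d \<alpha> l m) * (multinom d m l * pl d l r / ffall (real N) m)
                       * (multinom d m l * pl d l s / ffall (real N) m))"

definition acoef :: "real \<Rightarrow> nat \<Rightarrow> nat \<Rightarrow> real" where
  "acoef \<theta> n m = (if n = 0 then 1 else
     (\<theta> + 2 * real n - 1) * (-1) ^ (n - m) * pochhammer (\<theta> + real m) (n - 1)
       / (fact m * fact (n - m)))"

definition bcoef :: "nat \<Rightarrow> real \<Rightarrow> nat \<Rightarrow> nat \<Rightarrow> real" where
  "bcoef N \<theta> m l = (\<Sum>n=l..m. (ffall (real N) n / pochhammer (\<theta> + real N) n) ^ 2
       * (ffall (real m) n / pochhammer (\<theta> + real m) n) * acoef \<theta> n l)"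

end

theory Submission
  imports Defs "HOL-Computational_Algebra.Formal_Power_Series"
begin


lemma L1:
  fixes x y :: real
  shows "(\<Sum>i\<le>M. of_nat (M choose i) * ((-1)^i * pochhammer x i) * pochhammer (y + of_nat i) (M - i))
         = pochhammer (y - x) M"
proof (induction M arbitrary: y)
  case 0
  then show ?case by simp
next
  case (Suc M)
  define s where "s i = (-1::real)^i * pochhammer x i" for i
  have sS: "s (Suc i) = - s i * (x + of_nat i)" for i
    by (simp add: s_def pochhammer_Suc)
  have "(\<Sum>i\<le>Suc M. of_nat (Suc M choose i) * s i * pochhammer (y + of_nat i) (Suc M - i))
      = (\<Sum>i\<le>Suc M. of_nat (M choose i) * s i * pochhammer (y + of_nat i) (Suc M - i))
        + (\<Sum>i\<le>Suc M. (if i = 0 then 0 else of_nat (M choose (i - 1))) * s i * pochhammer (y + of_nat i) (Suc M - i))"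
  proof -
    have "of_nat (Suc M choose i) = (of_nat (M choose i) :: real) + (if i = 0 then 0 else of_nat (M choose (i - 1)))" for i
      by (cases i) auto
    then show ?thesis by (simp add: sum.distrib[symmetric] algebra_simps)
  qed
  also have "(\<Sum>i\<le>Suc M. of_nat (M choose i) * s i * pochhammer (y + of_nat i) (Suc M - i))
      = (\<Sum>i\<le>M. of_nat (M choose i) * s i * ((y + of_nat i) * pochhammer (y + 1 + of_nat i) (M - i)))"
    by (simp add: Suc_diff_le pochhammer_rec algebra_simps)
  also have "(\<Sum>i\<le>Suc M. (if i = 0 then 0 else of_nat (M choose (i - 1))) * s i * pochhammer (y + of_nat i) (Suc M - i))
      = (\<Sum>i\<le>M. of_nat (M choose i) * s (Suc i) * pochhammer (y + 1 + of_nat i) (M - i))"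
    by (subst sum.atMost_Suc_shift) (simp add: algebra_simps)
  also have "(\<Sum>i\<le>M. of_nat (M choose i) * s i * ((y + of_nat i) * pochhammer (y + 1 + of_nat i) (M - i)))
      + (\<Sum>i\<le>M. of_nat (M choose i) * s (Suc i) * pochhammer (y + 1 + of_nat i) (M - i))
      = (y - x) * (\<Sum>i\<le>M. of_nat (M choose i) * s i * pochhammer (y + 1 + of_nat i) (M - i))"
    by (simp add: sum_distrib_left sum.distrib[symmetric] sS algebra_simps)
  also have "\<dots> = (y - x) * pochhammer (y + 1 - x) M"
    using Suc.IH[of "y+1"] by (simp add: s_def add_ac)
  also have "\<dots> = pochhammer (y - x) (Suc M)"
    by (simp add: pochhammer_rec algebra_simps)
  finally show ?case by (simp add: s_def)
qed


lemma ffall_Suc: "ffall c (Suc k) = ffall c k * (c - real k)"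
  by (simp add: ffall_def)

lemma ffall_0[simp]: "ffall c 0 = 1"
  by (simp add: ffall_def)

lemma ffall_poch: "ffall c k = (-1)^k * pochhammer (-c) k"
  by (induction k) (simp_all add: ffall_Suc pochhammer_Suc algebra_simps)

lemma poch_ffall: "pochhammer (-c) k = (-1)^k * ffall c k"
  by (simp add: ffall_poch)

lemma ffall_nat: "k \<le> n \<Longrightarrow> ffall (real n) k * fact (n - k) = fact n"
proof (induction k)
  case 0 then show ?case by simp
next
  case (Suc k)
  have "fact (n - k) = (fact (n - Suc k) :: real) * real (n - k)"
    using Suc.prems by (metis Suc_diff_le diff_Suc_Suc diff_zero fact_Suc mult.commute)
  have "ffall (real n) (Suc k) * fact (n - Suc k) = ffall (real n) k * (fact (n - Suc k) * (real n - real k))"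
    by (simp add: ffall_Suc algebra_simps)
  also have "\<dots> = ffall (real n) k * fact (n - k)"
    using \<open>fact (n - k) = _\<close> Suc.prems by (simp add: of_nat_diff)
  finally show ?case using Suc by simp
qed

lemma ffall_add: "ffall c (a + b) = ffall c a * ffall (c - real a) b"
  by (induction b) (simp_all add: ffall_Suc algebra_simps)

lemma ffall_zero: "n < k \<Longrightarrow> ffall (real n) k = 0"
  unfolding ffall_def by (rule prod_zero) auto

lemma ffall_nz: "k \<le> n \<Longrightarrow> ffall (real n) k \<noteq> 0"
  using ffall_nat[of k n] by auto

definition hf :: "real \<Rightarrow> real \<Rightarrow> real \<Rightarrow> nat \<Rightarrow> real" where
  "hf a b c n = pochhammer a n * pochhammer b n / (pochhammer c n * fact n)"

lemma hf_sym: "hf a b c n = hf b a c n"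
  by (simp add: hf_def mult.commute)

lemma pfaff:
  assumes c: "\<And>k. pochhammer c k \<noteq> 0"
  shows "hf a b c n = (\<Sum>k\<le>n. hf a (c - b) c k * (-1)^k * pochhammer (a + of_nat k) (n - k) / fact (n - k))"
proof -
  have V: "(\<Sum>k=0..n. pochhammer (c - b) k * pochhammer (- of_nat n) k / (fact k * pochhammer c k))
       = pochhammer b n / pochhammer c n"
    using Vandermonde_pochhammer[of n c "c - b"] c by (force simp: pochhammer_eq_0_iff)
  have "(\<Sum>k\<le>n. hf a (c - b) c k * (-1)^k * pochhammer (a + of_nat k) (n - k) / fact (n - k))
      = (\<Sum>k\<le>n. pochhammer a n / fact n * (pochhammer (c - b) k * pochhammer (- of_nat n) k / (fact k * pochhammer c k)))"
  proof (rule sum.cong[OF refl])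
    fix k assume "k \<in> {..n}"
    then have kn: "k \<le> n" by simp
    have p: "pochhammer a n = pochhammer a k * pochhammer (a + of_nat k) (n - k)"
      using pochhammer_product'[of a k "n - k"] kn by simp
    have q: "pochhammer (- real n) k = (-1)^k * fact n / fact (n - k)"
      using ffall_nat[OF kn] by (simp add: poch_ffall field_simps)
    show "hf a (c - b) c k * (-1)^k * pochhammer (a + of_nat k) (n - k) / fact (n - k)
        = pochhammer a n / fact n * (pochhammer (c - b) k * pochhammer (- of_nat n) k / (fact k * pochhammer c k))"
      using c[of k] unfolding hf_def p q by (simp add: field_simps power_mult_distrib[symmetric])
  qed
  also have "\<dots> = pochhammer a n / fact n * (pochhammer b n / pochhammer c n)"
    by (simp only: sum_distrib_left[symmetric] atLeast0AtMost[symmetric] V)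
  finally show ?thesis by (simp add: hf_def field_simps)
qed


lemma euler:
  assumes c: "\<And>k. pochhammer c k \<noteq> 0"
  shows "hf a b c n = (\<Sum>j\<le>n. hf (c - a) (c - b) c j * pochhammer (a + b - c) (n - j) / fact (n - j))"
proof -
  define G where "G j i = hf (c - a) (c - b) c j / fact (n - j) *
     (of_nat ((n - j) choose i) * ((-1)^i * pochhammer (c - b + of_nat j) i) * pochhammer (a + of_nat j + of_nat i) (n - j - i))" for j i
  have "(\<Sum>j\<le>n. hf (c - a) (c - b) c j * pochhammer (a + b - c) (n - j) / fact (n - j))
      = (\<Sum>j\<le>n. \<Sum>i\<le>n - j. G j i)"
  proof (rule sum.cong[OF refl])
    fix j assume "j \<in> {..n}"
    have "pochhammer (a + b - c) (n - j) = pochhammer ((a + of_nat j) - (c - b + of_nat j)) (n - j)"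
      by (simp add: algebra_simps)
    also have "\<dots> = (\<Sum>i\<le>n - j. of_nat ((n - j) choose i) * ((-1)^i * pochhammer (c - b + of_nat j) i) * pochhammer (a + of_nat j + of_nat i) (n - j - i))"
      by (rule L1[symmetric])
    finally show "hf (c - a) (c - b) c j * pochhammer (a + b - c) (n - j) / fact (n - j) = (\<Sum>i\<le>n - j. G j i)"
      by (simp add: G_def sum_distrib_left sum_divide_distrib)
  qed
  also have "\<dots> = (\<Sum>(j,i)\<in>{(j,i). j + i \<le> n}. G j i)"
  proof -
    have "Sigma {..n} (\<lambda>j. {..n - j}) = {(j,i). j + i \<le> n}" by auto
    then show ?thesis by (simp add: sum.Sigma)
  qed
  also have "\<dots> = (\<Sum>k\<le>n. \<Sum>j\<le>k. G j (k - j))"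
    by (rule sum.triangle_reindex_eq)
  also have "\<dots> = (\<Sum>k\<le>n. (-1)^k * pochhammer (a + of_nat k) (n - k) / fact (n - k) *
        (\<Sum>j\<le>k. hf (c - b) (c - a) c j * (-1)^j * pochhammer (c - b + of_nat j) (k - j) / fact (k - j)))"
  proof (rule sum.cong[OF refl])
    fix k assume "k \<in> {..n}"
    then have kn: "k \<le> n" by simp
    show "(\<Sum>j\<le>k. G j (k - j)) = (-1)^k * pochhammer (a + of_nat k) (n - k) / fact (n - k) *
        (\<Sum>j\<le>k. hf (c - b) (c - a) c j * (-1)^j * pochhammer (c - b + of_nat j) (k - j) / fact (k - j))"
      unfolding sum_distrib_left
    proof (rule sum.cong[OF refl])
      fix j assume "j \<in> {..k}"
      then have jk: "j \<le> k" by simp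
      have b: "real ((n - j) choose (k - j)) = fact (n - j) / (fact (k - j) * fact (n - k))"
        using binomial_fact[of "k - j" "n - j", where 'a=real] jk kn by simp
      have s: "(-1::real)^(k - j) = (-1)^k * (-1)^j"
      proof -
        obtain t where t: "k = j + t" using jk le_Suc_ex by blast
        have "(-1::real)^j * (-1)^j = 1" by (simp flip: power_mult_distrib)
        then show ?thesis unfolding t by (simp add: power_add algebra_simps)
      qed
      have e1: "a + real j + real (k - j) = a + real k" using jk by simp
      have e2: "n - j - (k - j) = n - k" using jk kn by simp
      show "G j (k - j) = (-1)^k * pochhammer (a + of_nat k) (n - k) / fact (n - k) *
         (hf (c - b) (c - a) c j * (-1)^j * pochhammer (c - b + of_nat j) (k - j) / fact (k - j))"
        unfolding G_def b s e1 e2 by (simp add: hf_sym field_simps)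
    qed
  qed
  also have "\<dots> = (\<Sum>k\<le>n. (-1)^k * pochhammer (a + of_nat k) (n - k) / fact (n - k) * hf (c - b) a c k)"
    using pfaff[OF c, of "c - b" a] by simp
  also have "\<dots> = hf a b c n"
    using pfaff[OF c, of a b] by (simp add: hf_sym mult_ac)
  finally show ?thesis ..
qed


lemma simplex_pts_0: "simplex_pts 0 m = (if m = 0 then {\<lambda>_. 0} else {})"
  by (auto simp: simplex_pts_def)

lemma simplex_pts_Suc:
  "simplex_pts (Suc d) m = (\<lambda>(k,l). l(d := m - k)) ` Sigma {..m} (simplex_pts d)"
proof (rule set_eqI, rule iffI)
  fix l assume l: "l \<in> simplex_pts (Suc d) m"
  define k where "k = (\<Sum>i<d. l i)"
  have km: "k \<le> m" and ld: "l d = m - k"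
    using l by (auto simp: simplex_pts_def k_def)
  have "l(d := 0) \<in> simplex_pts d k"
    using l by (auto simp: simplex_pts_def k_def)
  moreover have "l = (l(d := 0))(d := m - k)" using ld by auto
  ultimately show "l \<in> (\<lambda>(k,l). l(d := m - k)) ` Sigma {..m} (simplex_pts d)"
    using km by (auto intro!: image_eqI[where x="(k, l(d:=0))"])
next
  fix l assume "l \<in> (\<lambda>(k,l). l(d := m - k)) ` Sigma {..m} (simplex_pts d)"
  then obtain k l' where kl: "k \<le> m" "l' \<in> simplex_pts d k" and l: "l = l'(d := m - k)" by auto
  have "(\<Sum>i<d. l i) = k" using kl unfolding l simplex_pts_def by auto
  then show "l \<in> simplex_pts (Suc d) m"
    using kl unfolding simplex_pts_def l by auto
qed

lemma simplex_inj: "inj_on (\<lambda>(k,l). l(d := m - k)) (Sigma {..m} (simplex_pts d))"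
  unfolding inj_on_def
proof (intro ballI impI)
  fix x y assume x: "x \<in> Sigma {..m} (simplex_pts d)" and y: "y \<in> Sigma {..m} (simplex_pts d)"
    and e0: "(case x of (k, l) \<Rightarrow> l(d := m - k)) = (case y of (k, l) \<Rightarrow> l(d := m - k))"
  obtain k l where xx: "x = (k, l)" by force
  obtain k' l' where yy: "y = (k', l')" by force
  have a: "k \<in> {..m}" "l \<in> simplex_pts d k" "k' \<in> {..m}" "l' \<in> simplex_pts d k'"
    using x y xx yy by auto
  have e: "l(d := m - k) = l'(d := m - k')" using e0 xx yy by simp
  from e have "m - k = m - k'" by (metis fun_upd_same)
  with a have kk: "k = k'" by auto
  have "l d = 0" "l' d = 0" using a by (auto simp: simplex_pts_def)
  then have "l = l'" using e by (metis fun_upd_triv fun_upd_upd)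
  with kk show "x = y" using xx yy by simp
qed

lemma finite_simplex_pts: "finite (simplex_pts d m)"
proof (induction d arbitrary: m)
  case 0 then show ?case by (simp add: simplex_pts_0)
next
  case (Suc d) then show ?case by (simp add: simplex_pts_Suc)
qed

lemma simplex_fps:
  fixes F :: "nat \<Rightarrow> nat \<Rightarrow> real"
  shows "(\<Sum>l\<in>simplex_pts d m. \<Prod>i<d. F i (l i)) = fps_nth (\<Prod>i<d. Abs_fps (F i)) m"
proof (induction d arbitrary: m)
  case 0 then show ?case by (simp add: simplex_pts_0)
next
  case (Suc d)
  have "(\<Sum>l\<in>simplex_pts (Suc d) m. \<Prod>i<Suc d. F i (l i))
      = (\<Sum>(k,l)\<in>Sigma {..m} (simplex_pts d). \<Prod>i<Suc d. F i ((l(d := m - k)) i))"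
    unfolding simplex_pts_Suc by (subst sum.reindex[OF simplex_inj]) (simp add: case_prod_beta)
  also have "\<dots> = (\<Sum>(k,l)\<in>Sigma {..m} (simplex_pts d). (\<Prod>i<d. F i (l i)) * F d (m - k))"
    by (rule sum.cong[OF refl]) (auto simp: prod.lessThan_Suc intro!: prod.cong)
  also have "\<dots> = (\<Sum>k\<le>m. (\<Sum>l\<in>simplex_pts d k. \<Prod>i<d. F i (l i)) * F d (m - k))"
    by (simp add: sum.Sigma[symmetric] finite_simplex_pts sum_distrib_right)
  also have "\<dots> = fps_nth ((\<Prod>i<d. Abs_fps (F i)) * Abs_fps (F d)) m"
    by (simp add: fps_mult_nth Suc.IH atLeast0AtMost)
  finally show ?case by (simp add: prod.lessThan_Suc)
qed


lemma poch_exp_mult: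
  "Abs_fps (\<lambda>k. pochhammer x k / fact k) * Abs_fps (\<lambda>k. pochhammer y k / fact k)
   = Abs_fps (\<lambda>k. pochhammer (x + y) k / fact k :: real)"
proof (rule fps_ext)
  fix n
  have "fps_nth (Abs_fps (\<lambda>k. pochhammer x k / fact k) * Abs_fps (\<lambda>k. pochhammer y k / fact k)) n
      = (\<Sum>k\<le>n. pochhammer x k / fact k * (pochhammer y (n - k) / fact (n - k)))"
    by (simp add: fps_mult_nth atLeast0AtMost)
  also have "\<dots> = (\<Sum>k\<le>n. of_nat (n choose k) * pochhammer x k * pochhammer y (n - k)) / fact n"
    unfolding sum_divide_distrib
    by (rule sum.cong[OF refl]) (simp add: binomial_fact field_simps)
  also have "\<dots> = pochhammer (x + y) n / fact n"
    by (simp add: pochhammer_binomial_sum)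
  finally show "fps_nth (Abs_fps (\<lambda>k. pochhammer x k / fact k) * Abs_fps (\<lambda>k. pochhammer y k / fact k)) n
      = fps_nth (Abs_fps (\<lambda>k. pochhammer (x + y) k / fact k :: real)) n" by simp
qed

lemma poch_exp_prod:
  fixes d :: nat shows "(\<Prod>i<d. Abs_fps (\<lambda>k. pochhammer (e i) k / fact k))
   = Abs_fps (\<lambda>k. pochhammer (\<Sum>i<d. e i) k / fact k :: real)"
proof (induction d)
  case 0
  show ?case
  proof (rule fps_ext)
    fix n show "fps_nth (\<Prod>i<0. Abs_fps (\<lambda>k. pochhammer (e i) k / fact k)) n
       = fps_nth (Abs_fps (\<lambda>k. pochhammer (\<Sum>i<0. e i) k / fact k :: real)) n"
      by (cases n) (simp_all add: pochhammer_0_left)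
  qed
next
  case (Suc d) then show ?case by (simp add: poch_exp_mult)
qed

lemma poch_neg_sq: "pochhammer (-x) k * pochhammer (-y) k = ffall x k * ffall y k"
proof -
  have "(-1::real)^k * (-1)^k = 1" by (simp flip: power_mult_distrib)
  then show ?thesis by (simp add: poch_ffall algebra_simps)
qed

lemma alg1:
  fixes F PF PR PS PA P0 P1 :: real
  assumes "F \<noteq> 0" "PF \<noteq> 0" "P1 \<noteq> 0" "P0 \<noteq> 0" "PA \<noteq> 0"
  shows "F / PF * PR / P1 * (F / PF * PS / P1) / (F / PF * PA / P0) = F * P0 / P1^2 * (PR * PS / (PA * PF))"
  using assms by (simp add: field_simps power2_eq_square)

lemma alg2:
  fixes F PF PR PS PA P0 FF :: real
  assumes "F \<noteq> 0" "PF \<noteq> 0" "FF \<noteq> 0" "P0 \<noteq> 0" "PA \<noteq> 0"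
  shows "1 / (F / PF * PA / P0) * (F / PF * PR / FF) * (F / PF * PS / FF) = F * P0 / FF^2 * (PR * PS / (PA * PF))"
  using assms by (simp add: field_simps power2_eq_square)

context
  fixes d N :: nat and \<alpha> :: "nat \<Rightarrow> real" and r s :: "nat \<Rightarrow> nat"
  assumes apos: "\<forall>i<d. \<alpha> i > 0" and d2: "d \<ge> 2"
    and r: "r \<in> simplex_pts d N" and s: "s \<in> simplex_pts d N"
begin

lemma theta_pos: "(\<Sum>i<d. \<alpha> i) > 0"
proof -
  have "0 < \<alpha> 0" using apos d2 by auto
  also have "\<alpha> 0 \<le> (\<Sum>i<d. \<alpha> i)"
    using apos d2 by (intro member_le_sum) auto
  finally show ?thesis .
qed

lemma sum_r: "(\<Sum>i<d. real (r i)) = real N" and sum_s: "(\<Sum>i<d. real (s i)) = real N"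
  using r s by (simp_all add: simplex_pts_def flip: of_nat_sum)

lemma xi_form:
  "xiH d \<alpha> m r s = fact m * pochhammer (\<Sum>i<d. \<alpha> i) m / pochhammer ((\<Sum>i<d. \<alpha> i) + N) m ^ 2
     * (\<Sum>l\<in>simplex_pts d m. \<Prod>i<d. hf (\<alpha> i + r i) (\<alpha> i + s i) (\<alpha> i) (l i))"
  unfolding xiH_def sum_distrib_left
proof (rule sum.cong[OF refl])
  fix l assume l: "l \<in> simplex_pts d m"
  define \<theta> where "\<theta> = (\<Sum>i<d. \<alpha> i)"
  have th: "\<theta> > 0" using theta_pos by (simp add: \<theta>_def)
  have sr: "(\<Sum>i<d. \<alpha> i + real (r i)) = \<theta> + N" using sum_r by (simp add: sum.distrib \<theta>_def)
  have ss: "(\<Sum>i<d. \<alpha> i + real (s i)) = \<theta> + N" using sum_s by (simp add: sum.distrib \<theta>_def)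
  define PR where "PR = (\<Prod>i<d. pochhammer (\<alpha> i + real (r i)) (l i))"
  define PS where "PS = (\<Prod>i<d. pochhammer (\<alpha> i + real (s i)) (l i))"
  define PA where "PA = (\<Prod>i<d. pochhammer (\<alpha> i) (l i))"
  define PF where "PF = (\<Prod>i<d. fact (l i) :: real)"
  have "PA > 0" unfolding PA_def using apos by (intro prod_pos) (simp add: pochhammer_pos)
  then have PA: "PA \<noteq> 0" by simp
  have PF: "PF \<noteq> 0" unfolding PF_def by auto
  have P1: "pochhammer (\<theta> + N) m \<noteq> 0" using th pochhammer_pos[of "\<theta> + N" m] by simp
  have P0: "pochhammer \<theta> m \<noteq> 0" using th pochhammer_pos[of "\<theta>" m] by simp
  have G: "(\<Prod>i<d. hf (\<alpha> i + r i) (\<alpha> i + s i) (\<alpha> i) (l i)) = PR * PS / (PA * PF)"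
    by (simp add: hf_def PR_def PS_def PA_def PF_def prod_dividef prod.distrib)
  show "DM d (\<lambda>i. \<alpha> i + real (r i)) l m * DM d (\<lambda>i. \<alpha> i + real (s i)) l m / DM d \<alpha> l m =
         fact m * pochhammer (\<Sum>i<d. \<alpha> i) m / (pochhammer ((\<Sum>i<d. \<alpha> i) + real N) m)\<^sup>2 *
         (\<Prod>i<d. hf (\<alpha> i + real (r i)) (\<alpha> i + real (s i)) (\<alpha> i) (l i))"
    unfolding G DM_def multinom_def sr ss
    unfolding \<theta>_def[symmetric] PR_def[symmetric] PS_def[symmetric] PA_def[symmetric] PF_def[symmetric]
    using PA PF P1 P0 by (intro alg1) simp_all
qed


lemma chi_form:
  assumes kN: "k \<le> N"
  shows "chiH d N \<alpha> k r s = fact k * pochhammer (\<Sum>i<d. \<alpha> i) k / ffall N k ^ 2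
     * (\<Sum>j\<in>simplex_pts d k. \<Prod>i<d. hf (- real (r i)) (- real (s i)) (\<alpha> i) (j i))"
  unfolding chiH_def sum_distrib_left
proof (rule sum.cong[OF refl])
  fix l assume l: "l \<in> simplex_pts d k"
  define \<theta> where "\<theta> = (\<Sum>i<d. \<alpha> i)"
  have th: "\<theta> > 0" using theta_pos by (simp add: \<theta>_def)
  define PR where "PR = pl d l r"
  define PS where "PS = pl d l s"
  define PA where "PA = (\<Prod>i<d. pochhammer (\<alpha> i) (l i))"
  define PF where "PF = (\<Prod>i<d. fact (l i) :: real)"
  have "PA > 0" unfolding PA_def using apos by (intro prod_pos) (simp add: pochhammer_pos)
  then have PA: "PA \<noteq> 0" by simp
  have PF: "PF \<noteq> 0" unfolding PF_def by auto
  have FF: "ffall N k \<noteq> 0" using ffall_nz[OF kN] .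
  have P0: "pochhammer \<theta> k \<noteq> 0" using th pochhammer_pos[of "\<theta>" k] by simp
  have G: "(\<Prod>i<d. hf (- real (r i)) (- real (s i)) (\<alpha> i) (l i)) = PR * PS / (PA * PF)"
    by (simp add: hf_def PR_def PS_def PA_def PF_def pl_def prod_dividef prod.distrib poch_neg_sq)
  show "1 / DM d \<alpha> l k * (multinom d k l * pl d l r / ffall (real N) k) * (multinom d k l * pl d l s / ffall (real N) k) =
         fact k * pochhammer (\<Sum>i<d. \<alpha> i) k / (ffall (real N) k)\<^sup>2 *
         (\<Prod>i<d. hf (- real (r i)) (- real (s i)) (\<alpha> i) (l i))"
    unfolding G DM_def multinom_def
    unfolding \<theta>_def[symmetric] PR_def[symmetric] PS_def[symmetric] PA_def[symmetric] PF_def[symmetric]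
    using PA PF FF P0 by (intro alg2) simp_all
qed

lemma conv:
  "(\<Sum>l\<in>simplex_pts d m. \<Prod>i<d. hf (\<alpha> i + r i) (\<alpha> i + s i) (\<alpha> i) (l i))
   = (\<Sum>k\<le>m. (\<Sum>j\<in>simplex_pts d k. \<Prod>i<d. hf (- real (r i)) (- real (s i)) (\<alpha> i) (j i))
        * (pochhammer ((\<Sum>i<d. \<alpha> i) + N + N) (m - k) / fact (m - k)))"
proof -
  define g where "g i = Abs_fps (\<lambda>n. hf (\<alpha> i + r i) (\<alpha> i + s i) (\<alpha> i) n)" for i
  define h where "h i = Abs_fps (\<lambda>n. hf (- real (r i)) (- real (s i)) (\<alpha> i) n)" for i
  define q where "q i = Abs_fps (\<lambda>n. pochhammer (\<alpha> i + r i + s i) n / fact n)" for i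
  have gi: "g i = h i * q i" if "i < d" for i
  proof (rule fps_ext)
    fix n
    have c: "\<And>k. pochhammer (\<alpha> i) k \<noteq> 0" using apos that pochhammer_pos[of "\<alpha> i"] by (metis order_less_irrefl)
    have "fps_nth (g i) n = (\<Sum>j\<le>n. hf (\<alpha> i - (\<alpha> i + r i)) (\<alpha> i - (\<alpha> i + s i)) (\<alpha> i) j *
        pochhammer ((\<alpha> i + r i) + (\<alpha> i + s i) - \<alpha> i) (n - j) / fact (n - j))"
      unfolding g_def fps_nth_Abs_fps by (rule euler[OF c])
    also have "\<dots> = fps_nth (h i * q i) n"
      by (simp add: h_def q_def fps_mult_nth atLeast0AtMost algebra_simps)
    finally show "fps_nth (g i) n = fps_nth (h i * q i) n" .
  qed
  have sq: "(\<Sum>i<d. \<alpha> i + r i + s i) = (\<Sum>i<d. \<alpha> i) + N + N"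
    using sum_r sum_s by (simp add: sum.distrib)
  have "(\<Sum>l\<in>simplex_pts d m. \<Prod>i<d. hf (\<alpha> i + r i) (\<alpha> i + s i) (\<alpha> i) (l i)) = fps_nth (\<Prod>i<d. g i) m"
    unfolding g_def by (rule simplex_fps)
  also have "(\<Prod>i<d. g i) = (\<Prod>i<d. h i) * (\<Prod>i<d. q i)"
    by (simp add: gi prod.distrib[symmetric])
  also have "(\<Prod>i<d. q i) = Abs_fps (\<lambda>n. pochhammer ((\<Sum>i<d. \<alpha> i) + N + N) n / fact n)"
    unfolding q_def poch_exp_prod sq ..
  also have "fps_nth ((\<Prod>i<d. h i) * Abs_fps (\<lambda>n. pochhammer ((\<Sum>i<d. \<alpha> i) + N + N) n / fact n)) m
      = (\<Sum>k\<le>m. fps_nth (\<Prod>i<d. h i) k * (pochhammer ((\<Sum>i<d. \<alpha> i) + N + N) (m - k) / fact (m - k)))"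
    by (simp add: fps_mult_nth atLeast0AtMost)
  also have "\<dots> = (\<Sum>k\<le>m. (\<Sum>j\<in>simplex_pts d k. \<Prod>i<d. hf (- real (r i)) (- real (s i)) (\<alpha> i) (j i))
        * (pochhammer ((\<Sum>i<d. \<alpha> i) + N + N) (m - k) / fact (m - k)))"
    using simplex_fps[of "\<lambda>i. hf (- real (r i)) (- real (s i)) (\<alpha> i)" d] by (simp add: h_def)
  finally show ?thesis .
qed

end


lemma alg3:
  fixes S X Y Z FL FT A th k l t j :: real
  assumes nz: "Z \<noteq> 0" "FL \<noteq> 0" "FT \<noteq> 0" "A \<noteq> 0" "t + 1 \<noteq> 0" and A: "A = th + k + j" and j: "j = l + t"
  shows "S * X * Y / (Z * FL * FT) + (k - l) * (X / (Z * A)) * ((th + 2 * (j + 1) - 1) * (- S) * Y / (FL * ((t + 1) * FT)))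
       = (- S) * (X * (k - (j + 1))) * (Y * (th + l + j)) / ((Z * A) * FL * ((t + 1) * FT))"
proof -
  define D where "D = (Z * A) * FL * ((t + 1) * FT)"
  have D: "D \<noteq> 0" using nz by (simp add: D_def)
  have key: "A * (t + 1) - (k - l) * (th + 2 * (j + 1) - 1) = - ((k - (j + 1)) * (th + l + j))"
    unfolding A j by (simp add: algebra_simps)
  have e1: "S * X * Y / (Z * FL * FT) = (S * X * Y * (A * (t + 1))) / D"
    unfolding D_def using nz by (simp add: divide_simps del: divide_const_simps)
  have e2: "(k - l) * (X / (Z * A)) * ((th + 2 * (j + 1) - 1) * (- S) * Y / (FL * ((t + 1) * FT)))
     = (- (S * X * Y * ((k - l) * (th + 2 * (j + 1) - 1)))) / D"
    unfolding D_def using nz by (simp add: ac_simps)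
  have "S * X * Y / (Z * FL * FT) + (k - l) * (X / (Z * A)) * ((th + 2 * (j + 1) - 1) * (- S) * Y / (FL * ((t + 1) * FT)))
     = (S * X * Y * (A * (t + 1)) - S * X * Y * ((k - l) * (th + 2 * (j + 1) - 1))) / D"
    unfolding e1 e2 by (simp add: diff_divide_distrib)
  also have "\<dots> = S * X * Y * (A * (t + 1) - (k - l) * (th + 2 * (j + 1) - 1)) / D"
    by (simp add: right_diff_distrib)
  also have "\<dots> = (- S) * (X * (k - (j + 1))) * (Y * (th + l + j)) / D"
    unfolding key by (simp add: algebra_simps)
  finally show ?thesis by (simp add: D_def)
qed

definition uu :: "real \<Rightarrow> nat \<Rightarrow> nat \<Rightarrow> real" where
  "uu \<theta> k n = ffall (real k) n / pochhammer (\<theta> + real k) n"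

lemma acoef_diag:
  assumes th: "\<theta> > 0"
  shows "uu \<theta> l l * acoef \<theta> l l = 1"
proof (cases l)
  case 0 then show ?thesis by (simp add: uu_def acoef_def)
next
  case (Suc l')
  have f: "ffall (real l) l = fact l" using ffall_nat[of l l] by simp
  have p: "pochhammer (\<theta> + real l) l = pochhammer (\<theta> + real l) l' * (\<theta> + 2 * real l - 1)"
    using Suc by (simp add: pochhammer_Suc algebra_simps)
  have nz: "pochhammer (\<theta> + real l) l' \<noteq> 0" "\<theta> + 2 * real l - 1 \<noteq> 0"
    using th pochhammer_pos[of "\<theta> + real l" l'] Suc by auto
  have a: "acoef \<theta> l l = (\<theta> + 2 * real l - 1) * pochhammer (\<theta> + real l) l' / fact l"
    using Suc by (simp add: acoef_def)
  have "uu \<theta> l l = fact l / (pochhammer (\<theta> + real l) l' * (\<theta> + 2 * real l - 1))"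
    unfolding uu_def f p ..
  then show ?thesis using nz unfolding a by simp
qed

lemma ua_tele:
  assumes th: "\<theta> > 0"
  shows "(real k - real l) * (\<Sum>n=l..l+t. uu \<theta> k n * acoef \<theta> n l)
     = (-1)^t * ffall (real k) (l + t + 1) * pochhammer (\<theta> + real l) (l + t)
        / (pochhammer (\<theta> + real k) (l + t) * fact l * fact t)"
proof (induction t)
  case 0
  show ?case
  proof (cases l)
    case 0 then show ?thesis by (simp add: uu_def acoef_def ffall_def)
  next
    case (Suc l')
    have pk: "pochhammer (\<theta> + real k) l \<noteq> 0" using th pochhammer_pos[of "\<theta> + real k" l] by simp
    have fl: "ffall (real k) (l + 0 + 1) = ffall (real k) l * (real k - real l)" by (simp add: ffall_Suc)
    have p: "pochhammer (\<theta> + real l) (l + 0) = pochhammer (\<theta> + real l) l' * (\<theta> + 2 * real l - 1)"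
      using Suc by (simp add: pochhammer_Suc algebra_simps)
    show ?thesis unfolding fl p using Suc pk
      by (simp add: uu_def acoef_def field_simps)
  qed
next
  case (Suc t)
  define j where "j = l + t"
  define X where "X = ffall (real k) (Suc j)"
  define Y where "Y = pochhammer (\<theta> + real l) j"
  define Z where "Z = pochhammer (\<theta> + real k) j"
  define S where "S = ((-1)::real)^t"
  define A where "A = \<theta> + real k + real j"
  have Z: "Z \<noteq> 0" using th pochhammer_pos[of "\<theta> + real k" j] by (simp add: Z_def)
  have A: "A \<noteq> 0" using th by (simp add: A_def)
  have u1: "uu \<theta> k (Suc j) = X / (Z * A)"
    by (simp add: uu_def X_def Z_def A_def pochhammer_Suc)
  have a1: "acoef \<theta> (Suc j) l = (\<theta> + 2 * (real j + 1) - 1) * (- S) * Y / (fact l * ((real t + 1) * fact t))"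
  proof -
    have e: "Suc j - l = Suc t" "Suc j - 1 = j" by (simp_all add: j_def)
    show ?thesis unfolding acoef_def e by (simp add: S_def Y_def)
  qed
  have IH: "(real k - real l) * (\<Sum>n=l..l+t. uu \<theta> k n * acoef \<theta> n l) = S * X * Y / (Z * fact l * fact t)"
    using Suc.IH by (simp add: S_def X_def Y_def Z_def j_def)
  have sp: "(\<Sum>n=l..l+Suc t. uu \<theta> k n * acoef \<theta> n l) = (\<Sum>n=l..l+t. uu \<theta> k n * acoef \<theta> n l) + uu \<theta> k (Suc j) * acoef \<theta> (Suc j) l"
    by (simp add: j_def)
  have "(real k - real l) * (\<Sum>n=l..l+Suc t. uu \<theta> k n * acoef \<theta> n l)
     = (real k - real l) * (\<Sum>n=l..l+t. uu \<theta> k n * acoef \<theta> n l) + (real k - real l) * (uu \<theta> k (Suc j) * acoef \<theta> (Suc j) l)"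
    unfolding sp by (rule distrib_left)
  also have "\<dots> = S * X * Y / (Z * fact l * fact t) + (real k - real l) * (X / (Z * A))
        * ((\<theta> + 2 * (real j + 1) - 1) * (- S) * Y / (fact l * ((real t + 1) * fact t)))"
    unfolding IH u1 a1 by (simp only: mult.assoc)
  also have "\<dots> = (- S) * (X * (real k - (real j + 1))) * (Y * (\<theta> + real l + real j)) / ((Z * A) * fact l * ((real t + 1) * fact t))"
    by (rule alg3) (use Z A in \<open>simp_all add: A_def j_def\<close>)
  also have "\<dots> = (-1)^Suc t * ffall (real k) (l + Suc t + 1) * pochhammer (\<theta> + real l) (l + Suc t)
        / (pochhammer (\<theta> + real k) (l + Suc t) * fact l * fact (Suc t))"
  proof -
    have e: "l + Suc t + 1 = Suc (Suc j)" "l + Suc t = Suc j" by (simp_all add: j_def)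
    show ?thesis unfolding e
      by (simp add: S_def X_def Y_def Z_def A_def ffall_Suc pochhammer_Suc ac_simps)
  qed
  finally show ?case .
qed

lemma ua:
  assumes th: "\<theta> > 0" and lk: "l \<le> k"
  shows "(\<Sum>n=l..k. uu \<theta> k n * acoef \<theta> n l) = (if k = l then 1 else 0)"
proof (cases "k = l")
  case True then show ?thesis using acoef_diag[OF th, of l] by simp
next
  case False
  then have lk': "l < k" using lk by simp
  obtain t where t: "k = l + t" using lk le_Suc_ex by blast
  have "(real k - real l) * (\<Sum>n=l..k. uu \<theta> k n * acoef \<theta> n l) = 0"
    using ua_tele[OF th, of k l t] unfolding t[symmetric] by (simp add: ffall_zero)
  then show ?thesis using lk' False by simp
qed


definition c2 :: "nat \<Rightarrow> real \<Rightarrow> nat \<Rightarrow> nat \<Rightarrow> real" where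
  "c2 N \<theta> m k = fact m * pochhammer \<theta> m / pochhammer (\<theta> + real N) m ^ 2
     * (ffall (real N) k ^ 2 / (fact k * pochhammer \<theta> k))
     * (pochhammer (\<theta> + real N + real N) (m - k) / fact (m - k))"

lemma alg4:
  fixes F Pm P1 FN FF Q Fnk Pkn Fi P2n Pci Pk :: real
  assumes nz: "Fi \<noteq> 0" "P2n \<noteq> 0" "Pci \<noteq> 0" "Fnk \<noteq> 0" "Pk \<noteq> 0" "Pkn \<noteq> 0" "P1 \<noteq> 0"
    and e: "Pk * Pkn = P2n * Pci"
  shows "F * Pm / P1 ^ 2 * ((FN * FF) ^ 2 / ((Fnk * Fi) * Pk)) * Q * (Fnk / Pkn)
       = F * Pm * FN ^ 2 / (P1 ^ 2 * P2n) * (FF * FF / (Pci * Fi)) * Q"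
proof -
  have "F * Pm / P1 ^ 2 * ((FN * FF) ^ 2 / ((Fnk * Fi) * Pk)) * Q * (Fnk / Pkn)
      = F * Pm * FN ^ 2 * (FF * FF) * Q / (P1 ^ 2 * Fi * (Pk * Pkn))"
    using nz by (simp add: field_simps power2_eq_square)
  also have "\<dots> = F * Pm * FN ^ 2 * (FF * FF) * Q / (P1 ^ 2 * Fi * (P2n * Pci))"
    unfolding e ..
  also have "\<dots> = F * Pm * FN ^ 2 / (P1 ^ 2 * P2n) * (FF * FF / (Pci * Fi)) * Q"
    using nz by (simp add: field_simps power2_eq_square)
  finally show ?thesis .
qed

lemma cu_term:
  assumes th: "\<theta> > 0" and nN: "n \<le> N" and im: "n + i \<le> m"
  shows "c2 N \<theta> m (n + i) * uu \<theta> (n + i) n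
    = fact m * pochhammer \<theta> m * ffall (real N) n ^ 2 / (pochhammer (\<theta> + real N) m ^ 2 * pochhammer \<theta> (2 * n))
      * hf (- (real N - real n)) (- (real N - real n)) (\<theta> + 2 * real n) i
      * (pochhammer (\<theta> + real N + real N) (m - n - i) / fact (m - n - i))"
proof -
  have f1: "ffall (real N) (n + i) = ffall (real N) n * ffall (real N - real n) i"
    by (rule ffall_add)
  have f2: "ffall (real N - real n) i * ffall (real N - real n) i
      = pochhammer (- (real N - real n)) i * pochhammer (- (real N - real n)) i"
    by (rule poch_neg_sq[symmetric])
  have f3: "ffall (real (n + i)) n * fact i = fact (n + i)"
    using ffall_nat[of n "n + i"] by simp
  have f4: "pochhammer \<theta> (n + i) * pochhammer (\<theta> + real (n + i)) n
      = pochhammer \<theta> (2 * n) * pochhammer (\<theta> + 2 * real n) i"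
  proof -
    have "pochhammer \<theta> (n + i) * pochhammer (\<theta> + real (n + i)) n = pochhammer \<theta> ((n + i) + n)"
      by (simp add: pochhammer_product')
    also have "(n + i) + n = 2 * n + i" by simp
    also have "pochhammer \<theta> (2 * n + i) = pochhammer \<theta> (2 * n) * pochhammer (\<theta> + 2 * real n) i"
      by (simp add: pochhammer_product')
    finally show ?thesis .
  qed
  have nz: "pochhammer \<theta> (2 * n) \<noteq> 0" "pochhammer (\<theta> + 2 * real n) i \<noteq> 0"
     "pochhammer \<theta> (n + i) \<noteq> 0" "pochhammer (\<theta> + real (n + i)) n \<noteq> 0"
    using th pochhammer_pos[of \<theta>] pochhammer_pos[of "\<theta> + 2 * real n"] pochhammer_pos[of "\<theta> + real (n + i)"]
    by (metis add_pos_nonneg less_irrefl of_nat_0_le_iff mult_nonneg_nonneg zero_le_numeral)+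
  have e: "m - (n + i) = m - n - i" by simp
  have fn: "ffall (real (n + i)) n \<noteq> 0" using ffall_nz[of n "n + i"] by simp
  have p1: "pochhammer (\<theta> + real N) m \<noteq> 0" using th pochhammer_pos[of "\<theta> + real N" m] by simp
  show ?thesis
    unfolding c2_def uu_def hf_def f1 e f3[symmetric] f2[symmetric]
    by (rule alg4[OF _ nz(1,2) fn nz(3,4) p1 f4]) simp
qed


lemma alg5:
  fixes Fm Pm FN P1m P2n PA Pc FM Fmn Pmn P1n :: real
  assumes nz: "P1n \<noteq> 0" "PA \<noteq> 0" "P2n \<noteq> 0" "Pc \<noteq> 0" "FM \<noteq> 0" "Pm \<noteq> 0" "Pmn \<noteq> 0"
    and e1: "P1m = P1n * PA" and e2: "P2n * Pc = Pm * Pmn" and e3: "Fm = Fmn * FM"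
  shows "Fm * Pm * FN ^ 2 / (P1m ^ 2 * P2n) * (PA * PA / (Pc * FM)) = Fmn / Pmn * (FN / P1n) ^ 2"
proof -
  have "Fm * Pm * FN ^ 2 / (P1m ^ 2 * P2n) * (PA * PA / (Pc * FM)) = Fmn * Pm * FN ^ 2 / (P1n ^ 2 * (P2n * Pc))"
    unfolding e1 e3 using nz by (simp add: field_simps power2_eq_square)
  also have "\<dots> = Fmn / Pmn * (FN / P1n) ^ 2"
    unfolding e2 using nz by (simp add: field_simps power2_eq_square)
  finally show ?thesis .
qed

lemma cu:
  assumes th: "\<theta> > 0" and nm: "n \<le> m" and mN: "m \<le> N"
  shows "(\<Sum>k=n..m. c2 N \<theta> m k * uu \<theta> k n) = uu \<theta> m n * (ffall (real N) n / pochhammer (\<theta> + real N) n) ^ 2"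
proof -
  define M where "M = m - n"
  define K where "K = fact m * pochhammer \<theta> m * ffall (real N) n ^ 2 / (pochhammer (\<theta> + real N) m ^ 2 * pochhammer \<theta> (2 * n))"
  define A where "A = \<theta> + real N + real n"
  define c where "c = \<theta> + 2 * real n"
  have cpos: "\<And>k. pochhammer c k \<noteq> 0" using th pochhammer_pos[of c] by (simp add: c_def) (metis less_irrefl)
  have "(\<Sum>k=n..m. c2 N \<theta> m k * uu \<theta> k n) = (\<Sum>i=0..M. c2 N \<theta> m (i + n) * uu \<theta> (i + n) n)"
    using sum.shift_bounds_cl_nat_ivl[of "\<lambda>k. c2 N \<theta> m k * uu \<theta> k n" 0 n M] nm by (simp add: M_def)
  also have "\<dots> = (\<Sum>i\<le>M. K * (hf (c - A) (c - A) c i * (pochhammer (A + A - c) (M - i) / fact (M - i))))"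
    unfolding atLeast0AtMost
  proof (rule sum.cong[OF refl])
    fix i assume "i \<in> {..M}"
    then have im: "n + i \<le> m" using nm by (simp add: M_def)
    have e1: "c - A = - (real N - real n)" by (simp add: A_def c_def)
    have e2: "A + A - c = \<theta> + real N + real N" by (simp add: A_def c_def)
    have e3: "M - i = m - n - i" by (simp add: M_def)
    show "c2 N \<theta> m (i + n) * uu \<theta> (i + n) n = K * (hf (c - A) (c - A) c i * (pochhammer (A + A - c) (M - i) / fact (M - i)))"
      unfolding e1 e2 e3 using cu_term[OF th _ im, of N] mN nm unfolding K_def c_def add.commute[of i n]
      by (simp only: mult.assoc)
  qed
  also have "\<dots> = K * hf A A c M"
    unfolding sum_distrib_left[symmetric] using euler[OF cpos, of A A M] by (simp add: mult.assoc)
  also have "\<dots> = uu \<theta> m n * (ffall (real N) n / pochhammer (\<theta> + real N) n) ^ 2"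
  proof -
    have q1: "pochhammer (\<theta> + real N) m = pochhammer (\<theta> + real N) n * pochhammer A M"
      using pochhammer_product'[of "\<theta> + real N" n M] nm by (simp add: M_def A_def add_ac)
    have q2: "pochhammer \<theta> (2 * n) * pochhammer c M = pochhammer \<theta> m * pochhammer (\<theta> + real m) n"
    proof -
      have "pochhammer \<theta> (2 * n) * pochhammer c M = pochhammer \<theta> (2 * n + M)"
        by (simp add: pochhammer_product' c_def)
      also have "2 * n + M = m + n" using nm by (simp add: M_def)
      also have "pochhammer \<theta> (m + n) = pochhammer \<theta> m * pochhammer (\<theta> + real m) n"
        by (simp add: pochhammer_product')
      finally show ?thesis .
    qed
    have q3: "fact m = ffall (real m) n * fact M"
      using ffall_nat[OF nm] by (simp add: M_def)
    have nz: "pochhammer (\<theta> + real N) n \<noteq> 0" "pochhammer A M \<noteq> 0" "pochhammer \<theta> (2 * n) \<noteq> 0"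
        "pochhammer c M \<noteq> 0" "(fact M :: real) \<noteq> 0" "pochhammer \<theta> m \<noteq> 0" "pochhammer (\<theta> + real m) n \<noteq> 0"
      using th pochhammer_pos[of "\<theta> + real N" n] pochhammer_pos[of A M] pochhammer_pos[of \<theta> "2 * n"] pochhammer_pos[of \<theta> m]
        pochhammer_pos[of c M] pochhammer_pos[of "\<theta> + real m" n]
      by (auto simp: A_def c_def)
    show ?thesis
      unfolding K_def hf_def uu_def
      using alg5[OF nz q1 q2 q3, of "ffall (real N) n"] by (simp add: mult.assoc)
  qed
  finally show ?thesis .
qed


lemma b_eq:
  assumes th: "\<theta> > 0" and lm: "l \<le> m" and mN: "m \<le> N"
  shows "bcoef N \<theta> m l = c2 N \<theta> m l"
proof -
  have "bcoef N \<theta> m l = (\<Sum>n=l..m. (\<Sum>k=n..m. c2 N \<theta> m k * uu \<theta> k n) * acoef \<theta> n l)"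
    unfolding bcoef_def
  proof (rule sum.cong[OF refl])
    fix n assume "n \<in> {l..m}"
    then have nm: "n \<le> m" by simp
    show "(ffall (real N) n / pochhammer (\<theta> + real N) n)\<^sup>2 * (ffall (real m) n / pochhammer (\<theta> + real m) n) * acoef \<theta> n l
        = (\<Sum>k=n..m. c2 N \<theta> m k * uu \<theta> k n) * acoef \<theta> n l"
      unfolding cu[OF th nm mN] by (simp add: uu_def)
  qed
  also have "\<dots> = (\<Sum>n\<in>{l..m}. \<Sum>k\<in>{k. k \<in> {l..m} \<and> n \<le> k}. c2 N \<theta> m k * uu \<theta> k n * acoef \<theta> n l)"
  proof (rule sum.cong[OF refl])
    fix n assume "n \<in> {l..m}"
    then have "{k. k \<in> {l..m} \<and> n \<le> k} = {n..m}" by auto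
    then show "(\<Sum>k=n..m. c2 N \<theta> m k * uu \<theta> k n) * acoef \<theta> n l
       = (\<Sum>k\<in>{k. k \<in> {l..m} \<and> n \<le> k}. c2 N \<theta> m k * uu \<theta> k n * acoef \<theta> n l)"
      by (simp add: sum_distrib_right)
  qed
  also have "\<dots> = (\<Sum>k\<in>{l..m}. \<Sum>n\<in>{n. n \<in> {l..m} \<and> n \<le> k}. c2 N \<theta> m k * uu \<theta> k n * acoef \<theta> n l)"
    by (rule sum.swap_restrict) auto
  also have "\<dots> = (\<Sum>k\<in>{l..m}. c2 N \<theta> m k * (if k = l then 1 else 0))"
  proof (rule sum.cong[OF refl])
    fix k assume k: "k \<in> {l..m}"
    then have "{n. n \<in> {l..m} \<and> n \<le> k} = {l..k}" by auto
    then have "(\<Sum>n\<in>{n. n \<in> {l..m} \<and> n \<le> k}. c2 N \<theta> m k * uu \<theta> k n * acoef \<theta> n l)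
       = c2 N \<theta> m k * (\<Sum>n=l..k. uu \<theta> k n * acoef \<theta> n l)"
      by (simp add: sum_distrib_left mult.assoc)
    also have "\<dots> = c2 N \<theta> m k * (if k = l then 1 else 0)"
      using ua[OF th, of l k] k by simp
    finally show "(\<Sum>n\<in>{n. n \<in> {l..m} \<and> n \<le> k}. c2 N \<theta> m k * uu \<theta> k n * acoef \<theta> n l)
       = c2 N \<theta> m k * (if k = l then 1 else 0)" .
  qed
  also have "\<dots> = (\<Sum>k\<in>{l..m}. if k = l then c2 N \<theta> m k else 0)"
    by (rule sum.cong) auto
  also have "\<dots> = c2 N \<theta> m l" using lm by (simp add: sum.delta')
  finally show ?thesis .
qed

theorem corollary3p5:
  fixes d N m :: nat and \<alpha> :: "nat \<Rightarrow> real" and r s :: "nat \<Rightarrow> nat"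
  assumes "d \<ge> 2"
    and "\<forall>i<d. \<alpha> i > 0"
    and "m \<le> N"
    and "r \<in> simplex_pts d N" and "s \<in> simplex_pts d N"
  shows "xiH d \<alpha> m r s
       = (\<Sum>l=0..m. bcoef N (\<Sum>i<d. \<alpha> i) m l * chiH d N \<alpha> l r s)"
proof -
  note A = assms(2,1,4,5)
  define \<theta> where "\<theta> = (\<Sum>i<d. \<alpha> i)"
  have th: "\<theta> > 0" using theta_pos[OF A] by (simp add: \<theta>_def)
  have "xiH d \<alpha> m r s = fact m * pochhammer \<theta> m / pochhammer (\<theta> + N) m ^ 2
     * (\<Sum>k\<le>m. (\<Sum>j\<in>simplex_pts d k. \<Prod>i<d. hf (- real (r i)) (- real (s i)) (\<alpha> i) (j i))
        * (pochhammer (\<theta> + N + N) (m - k) / fact (m - k)))"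
    unfolding xi_form[OF A] conv[OF A] \<theta>_def ..
  also have "\<dots> = (\<Sum>k\<le>m. c2 N \<theta> m k * chiH d N \<alpha> k r s)"
    unfolding sum_distrib_left
  proof (rule sum.cong[OF refl])
    fix k assume "k \<in> {..m}"
    then have kN: "k \<le> N" using assms(3) by simp
    have nz: "ffall (real N) k \<noteq> 0" "pochhammer \<theta> k \<noteq> 0" "(fact k :: real) \<noteq> 0"
      using ffall_nz[OF kN] th pochhammer_pos[of \<theta> k] by auto
    have "(\<Sum>j\<in>simplex_pts d k. \<Prod>i<d. hf (- real (r i)) (- real (s i)) (\<alpha> i) (j i))
        = chiH d N \<alpha> k r s * (ffall (real N) k ^ 2 / (fact k * pochhammer \<theta> k))"
      unfolding chi_form[OF A kN] \<theta>_def[symmetric] using nz by (simp add: field_simps)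
    then show "fact m * pochhammer \<theta> m / (pochhammer (\<theta> + real N) m)\<^sup>2 *
          ((\<Sum>j\<in>simplex_pts d k. \<Prod>i<d. hf (- real (r i)) (- real (s i)) (\<alpha> i) (j i)) *
           (pochhammer (\<theta> + real N + real N) (m - k) / fact (m - k))) =
         c2 N \<theta> m k * chiH d N \<alpha> k r s"
      by (simp add: c2_def mult_ac)
  qed
  also have "\<dots> = (\<Sum>l=0..m. bcoef N \<theta> m l * chiH d N \<alpha> l r s)"
    unfolding atLeast0AtMost using b_eq[OF th _ assms(3)] by (intro sum.cong) auto
  finally show ?thesis by (simp add: \<theta>_def)
qed


end
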